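(* Let $a>0$ and let $\theta_0,\theta_1,\theta_2\in\mathbb{R}$ be distinct. In the $(t,x)$-plane consider the points $P_i=\left(\theta_i,\tfrac12 a\theta_i^2\right)$, $i=0,1,2$, on the parabola $x=\tfrac12 at^2$. For $c>0$ equip the plane with the Euclidean inner product $u\cdot v=c^2u_tv_t+u_xv_x$ associated to the metric $ds^2=dx^2+c^2dt^2$, and let $\theta(c)\in[0,\pi/2]$ be the (acute) angle between the chords $P_0P_1$ and $P_0P_2$, defined by $\cos^2(\theta(c))=\frac{(u\cdot v)^2}{(u\cdot u)(v\cdot v)}$ with $u=P_1-P_0$, $v=P_2-P_0$. Then $$\theta(c)^2\sim\frac{a^2}{4c^2}(\theta_1-\theta_2)^2\quad\text{as } c\to\infty,$$ an asymptotic which does not depend on $\theta_0$.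
   Context: The parabola $x=\tfrac12at^2$ is the $c\to\infty$ limit of the ellipses $\left(x-\frac{c^2}{a}\right)^2+c^2t^2=\frac{c^4}{a^2}$, parametrised as $x=\frac{c^2}{a}(1-\cos(a\theta/c))$, $t=\frac{c}{a}\sin(a\theta/c)$; each such ellipse is a metric circle for $ds^2=dx^2+c^2dt^2$. *)

theory Defs
  imports "HOL-Analysis.Analysis" "HOL-Library.Landau_Symbols"
begin

definition cinner :: "real \<Rightarrow> real \<times> real \<Rightarrow> real \<times> real \<Rightarrow> real" where
  "cinner c u v = c^2 * fst u * fst v + snd u * snd v"

definition parab_pt :: "real \<Rightarrow> real \<Rightarrow> real \<times> real" where
  "parab_pt a s = (s, a * s^2 / 2)"

definition chord_angle :: "real \<Rightarrow> real \<Rightarrow> real \<Rightarrow> real \<Rightarrow> real \<Rightarrow> real" where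
  "chord_angle a t0 t1 t2 c =
     (let u = parab_pt a t1 - parab_pt a t0; v = parab_pt a t2 - parab_pt a t0
      in arccos (sqrt ((cinner c u v)^2 / (cinner c u u * cinner c v v))))"

end

theory Submission
  imports Defs "HOL-Real_Asymp.Real_Asymp"
begin

lemma key_angle:
  fixes a t0 t1 t2 c :: real
  assumes "t0 \<noteq> t1" and "t0 \<noteq> t2" and c: "c > 0"
    and pos: "c^2 + (a*(t1+t0)/2)*(a*(t2+t0)/2) > 0"
  shows "chord_angle a t0 t1 t2 c = arctan (\<bar>a\<bar>*\<bar>t1-t2\<bar>/2 * c / (c^2 + (a*(t1+t0)/2)*(a*(t2+t0)/2)))"
proof -
  define p where "p = a*(t1+t0)/2"
  define q where "q = a*(t2+t0)/2"
  define d1 where "d1 = t1 - t0"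
  define d2 where "d2 = t2 - t0"
  have d1: "d1 \<noteq> 0" and d2: "d2 \<noteq> 0" using assms by (auto simp: d1_def d2_def)
  have pos': "c^2 + p*q > 0" using pos by (simp add: p_def q_def)
  have u: "parab_pt a t1 - parab_pt a t0 = (d1, d1*p)"
    by (simp add: parab_pt_def d1_def p_def power2_eq_square algebra_simps)
  have v: "parab_pt a t2 - parab_pt a t0 = (d2, d2*q)"
    by (simp add: parab_pt_def d2_def q_def power2_eq_square algebra_simps)
  have pp: "c^2 + p^2 > 0" "c^2 + q^2 > 0" using c by (auto intro: add_pos_nonneg)
  define X where "X = (c^2+p*q)^2 / ((c^2+p^2)*(c^2+q^2))"
  define S where "S = c^2*(p-q)^2 / ((c^2+p^2)*(c^2+q^2))"
  have cX: "(cinner c (d1, d1*p) (d2, d2*q))^2 / (cinner c (d1, d1*p) (d1, d1*p) * cinner c (d2, d2*q) (d2, d2*q)) = X"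
  proof -
    have n: "(cinner c (d1, d1*p) (d2, d2*q))^2 = (d1*d2)^2 * (c^2+p*q)^2"
      unfolding cinner_def by (simp add: power2_eq_square algebra_simps)
    have dd: "cinner c (d1, d1*p) (d1, d1*p) * cinner c (d2, d2*q) (d2, d2*q) = (d1*d2)^2 * ((c^2+p^2)*(c^2+q^2))"
      unfolding cinner_def by (simp add: power2_eq_square algebra_simps)
    have "(d1*d2)^2 \<noteq> 0" using d1 d2 by simp
    then show ?thesis unfolding n dd X_def by simp
  qed
  have XS: "1 - X = S"
  proof -
    have D: "(c^2+p^2)*(c^2+q^2) > 0" using pp by simp
    have e: "(c^2+p^2)*(c^2+q^2) - (c^2+p*q)^2 = c^2*(p-q)^2"
      by (simp add: power2_eq_square algebra_simps)
    have "1 - X = ((c^2+p^2)*(c^2+q^2) - (c^2+p*q)^2) / ((c^2+p^2)*(c^2+q^2))"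
      unfolding X_def using D c by (simp add: diff_divide_distrib)
    then show ?thesis unfolding e S_def .
  qed
  have Xpos: "X > 0" using pos' pp unfolding X_def by (simp add: divide_pos_pos)
  have S0: "S \<ge> 0" using pp unfolding S_def by simp
  have ang: "chord_angle a t0 t1 t2 c = arccos (sqrt X)"
    unfolding chord_angle_def Let_def u v cX ..
  have "arccos (sqrt X) = arcsin (sqrt S)"
  proof -
    have "arcsin (sqrt S) = arccos (sqrt (1 - (sqrt S)^2))"
      by (rule arcsin_arccos_sqrt_pos) (use S0 XS Xpos in auto)
    also have "1 - (sqrt S)^2 = X" using S0 XS by simp
    finally show ?thesis by simp
  qed
  also have "\<dots> = arctan (sqrt S / sqrt (1 - (sqrt S)^2))"
    by (rule arcsin_arctan) (use S0 XS Xpos in \<open>auto intro: order.strict_trans2[of _ 0]\<close>)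
  also have "sqrt S / sqrt (1 - (sqrt S)^2) = sqrt (S / X)"
    using S0 XS by (simp add: real_sqrt_divide)
  also have "S / X = (c * \<bar>p - q\<bar> / (c^2 + p*q))^2"
  proof -
    have D: "(c^2+p^2)*(c^2+q^2) \<noteq> 0" using pp c by simp
    have "S / X = (c^2*(p-q)^2) / (c^2+p*q)^2"
      unfolding S_def X_def using D c by simp
    also have "\<dots> = (c * \<bar>p - q\<bar> / (c^2 + p*q))^2"
      by (simp add: power_divide power_mult_distrib)
    finally show ?thesis .
  qed
  also have "sqrt \<dots> = c * \<bar>p - q\<bar> / (c^2 + p*q)"
    using c pos' by simp
  also have "\<bar>p - q\<bar> = \<bar>a\<bar>*\<bar>t1-t2\<bar>/2"
    unfolding p_def q_def by (simp add: abs_mult flip: right_diff_distrib diff_divide_distrib)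
  finally show ?thesis using ang by (simp add: p_def q_def mult_ac)
qed

theorem mainTheorem5:
  fixes a t0 t1 t2 :: real
  assumes "a > 0" and "t0 \<noteq> t1" and "t0 \<noteq> t2" and "t1 \<noteq> t2"
  shows "(\<lambda>c. (chord_angle a t0 t1 t2 c)^2)
           \<sim>[at_top] (\<lambda>c. a^2 / (4 * c^2) * (t1 - t2)^2)"
proof -
  define m where "m = (a*(t1+t0)/2)*(a*(t2+t0)/2)"
  define k where "k = \<bar>a\<bar>*\<bar>t1-t2\<bar>/2"
  have k: "k > 0" using assms unfolding k_def by simp
  have A: "(\<lambda>c. arctan(k*c/(c^2+m))^2) \<sim>[at_top] (\<lambda>c. k^2/c^2)"
    using k by real_asymp
  have E1: "eventually (\<lambda>c. arctan(k*c/(c^2+m))^2 = (chord_angle a t0 t1 t2 c)^2) at_top"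
    using eventually_ge_at_top[of "1 + \<bar>m\<bar>"]
  proof eventually_elim
    case (elim c)
    have c1: "c \<ge> 1" using elim by simp
    have "c^2 \<ge> c" using c1 by (simp add: power2_eq_square)
    then have "c^2 + m > 0" using elim by linarith
    then show ?case using key_angle[of t0 t1 t2 c a] assms c1
      unfolding k_def m_def by simp
  qed
  have E2: "eventually (\<lambda>c. k^2/c^2 = a^2 / (4 * c^2) * (t1 - t2)^2) at_top"
    by (intro always_eventually allI) (simp add: k_def power_divide power_mult_distrib power2_abs)
  show ?thesis by (rule asymp_equiv_transfer[OF A E1 E2])
qed

end
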